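(* Let $\alpha\in(0,1)$, $t\ge0$, $\Delta\in[0,1/2]$ with $t>0$ or $\Delta<1/2$. Let $\hat\theta_1,\dots,\hat\theta_{B^*}$ in the Unimodal HulC procedure be independent, continuously distributed, computed from approximately equal-sized disjoint parts of the data, and suppose there are $r_{n,\alpha}>0$, $\delta_{n,\alpha}\ge0$ and a continuous random variable $W$, unimodal at $0$, with $\Delta=|\tfrac12-\mathbb{P}(W\le0)|$, such that for every $j$, \[ \sup_{u\in\mathbb{R}}\big|\mathbb{P}(r_{n,\alpha}(\hat\theta_j-\theta_0)\le u)-\mathbb{P}(W\le u)\big|\le\delta_{n,\alpha}. \] Then $\mathbb{P}(\theta_0\notin\widehat{\mathrm{CI}}^{\mathrm{mode}}_\alpha)\le\alpha\big(1-10B_{\alpha,t,\Delta}(1+t)\delta_{n,\alpha}\big)_+^{-1}$ (interpreted as $+\infty$ when the denominator is $0$).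
   Context: For integer $B\ge0$ and $\Delta\in[0,1/2]$, $P(B;\Delta):=(\tfrac12-\Delta)^B+(\tfrac12+\Delta)^B$. $Q(B;t,\Delta):=P(B;\Delta)(1+t)^{-B+1}$ and $B_{\alpha,t,\Delta}$ is the smallest integer $B\ge1$ with $Q(B;t,\Delta)\le\alpha$. A random variable $W$ is unimodal at $0$ if its distribution function is convex on $(-\infty,0]$ and concave on $[0,\infty)$. Unimodal HulC procedure: with $B=B_{\alpha,t,\Delta}$, set $\eta_{\alpha,t}:=\frac{Q(B-1;t,\Delta)-\alpha}{Q(B-1;t,\Delta)-Q(B;t,\Delta)}$; draw $U\sim\mathrm{Unif}[0,1]$ independent of the data and set $B^*=B$ if $U\le\eta_{\alpha,t}$, else $B^*=B-1$; split the data randomly into $B^*$ disjoint parts of approximately equal size, compute $\hat\theta_j$ (an estimate of $\theta_0\in\mathbb{R}$) on part $j$, let $\hat\theta_{\max}=\max_j\hat\theta_j$, $\hat\theta_{\min}=\min_j\hat\theta_j$, and output $\widehat{\mathrm{CI}}^{\mathrm{mode}}_\alpha:=[\hat\theta_{\min}-t(\hat\theta_{\max}-\hat\theta_{\min}),\ \hat\theta_{\max}+t(\hat\theta_{\max}-\hat\theta_{\min})]$. *)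

theory Defs
  imports "HOL-Probability.Probability"
begin

definition hulcP :: "nat \<Rightarrow> real \<Rightarrow> real" where
  "hulcP B \<Delta> = (1/2 - \<Delta>) ^ B + (1/2 + \<Delta>) ^ B"

definition hulcQ :: "nat \<Rightarrow> real \<Rightarrow> real \<Rightarrow> real" where
  "hulcQ B t \<Delta> = hulcP B \<Delta> * (1 + t) powi (1 - int B)"

definition hulcB :: "real \<Rightarrow> real \<Rightarrow> real \<Rightarrow> nat" where
  "hulcB \<alpha> t \<Delta> = (LEAST B. 1 \<le> B \<and> hulcQ B t \<Delta> \<le> \<alpha>)"

definition hulc_eta :: "real \<Rightarrow> real \<Rightarrow> real \<Rightarrow> real" where
  "hulc_eta \<alpha> t \<Delta> =
     (let B = hulcB \<alpha> t \<Delta> in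
      (hulcQ (B - 1) t \<Delta> - \<alpha>) / (hulcQ (B - 1) t \<Delta> - hulcQ B t \<Delta>))"

definition est_max :: "nat \<Rightarrow> (nat \<Rightarrow> real) \<Rightarrow> real" where
  "est_max k \<theta> = Max (\<theta> ` {..<k})"

definition est_min :: "nat \<Rightarrow> (nat \<Rightarrow> real) \<Rightarrow> real" where
  "est_min k \<theta> = Min (\<theta> ` {..<k})"

definition ci_mode :: "real \<Rightarrow> nat \<Rightarrow> (nat \<Rightarrow> real) \<Rightarrow> real set" where
  "ci_mode t k \<theta> =
     {est_min k \<theta> - t * (est_max k \<theta> - est_min k \<theta>) ..
      est_max k \<theta> + t * (est_max k \<theta> - est_min k \<theta>)}"

definition hulc_Bstar :: "real \<Rightarrow> real \<Rightarrow> real \<Rightarrow> real \<Rightarrow> nat" where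
  "hulc_Bstar \<alpha> t \<Delta> u =
     (if u \<le> hulc_eta \<alpha> t \<Delta> then hulcB \<alpha> t \<Delta> else hulcB \<alpha> t \<Delta> - 1)"

definition unimodal_at_0 :: "'b measure \<Rightarrow> ('b \<Rightarrow> real) \<Rightarrow> bool" where
  "unimodal_at_0 N W \<longleftrightarrow>
     (let F = (\<lambda>x. measure N {w \<in> space N. W w \<le> x}) in
      convex_on {..0} F \<and> concave_on {0..} F)"

end

theory Submission
  imports Defs
begin



lemma bern:
  fixes u d :: real
  assumes "0 \<le> u" "0 \<le> d"
  shows "real k * u^(k-1) * d \<le> (u+d)^k - u^k"
proof (induction k)
  case 0 then show ?case by simp
next
  case (Suc m)
  show ?case
  proof (cases m)
    case 0 then show ?thesis by simp
  next
    case (Suc m')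
    have "(u+d)^(Suc m) - u^(Suc m) = (u+d)*((u+d)^m - u^m) + d*u^m" by (simp add: algebra_simps)
    also have "\<dots> \<ge> (u+d)*(real m * u^(m-1) * d) + d*u^m"
      using Suc.IH assms by (intro add_right_mono mult_left_mono) auto
    finally have 1: "(u+d)^(Suc m) - u^(Suc m) \<ge> (u+d)*(real m * u^(m-1) * d) + d*u^m" .
    have "u * u^(m-1) = u^m" using Suc by simp
    hence "(u+d)*(real m * u^(m-1) * d) \<ge> real m * u^m * d"
      using assms by (smt (verit, ccfv_SIG) mult_nonneg_nonneg of_nat_0_le_iff zero_le_power distrib_right mult.assoc mult.commute)
    with 1 show ?thesis by (simp add: algebra_simps)
  qed
qed

lemma mvt_up:
  fixes y d :: real
  assumes "0 \<le> y" "0 \<le> d"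
  shows "(y+d)^k - y^k \<le> real k * d * (y+d)^(k-1)"
proof (induction k)
  case 0 then show ?case by simp
next
  case (Suc m)
  have "(y+d)^(Suc m) - y^(Suc m) = y*((y+d)^m - y^m) + d*(y+d)^m" by (simp add: algebra_simps)
  also have "\<dots> \<le> y*(real m * d * (y+d)^(m-1)) + d*(y+d)^m"
    using Suc.IH assms by (intro add_right_mono mult_left_mono) auto
  also have "\<dots> \<le> real (Suc m) * d * (y+d)^m"
  proof (cases m)
    case 0 then show ?thesis by simp
  next
    case (Suc m')
    have "y * (y+d)^(m-1) \<le> (y+d)*(y+d)^(m-1)" using assms by (intro mult_right_mono) auto
    also have "\<dots> = (y+d)^m" using Suc by simp
    finally have "y*(real m * d * (y+d)^(m-1)) \<le> real m * d * (y+d)^m"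
      using assms by (smt (verit) mult.commute mult.left_commute mult_left_mono mult_nonneg_nonneg of_nat_0_le_iff)
    then show ?thesis by (simp add: algebra_simps)
  qed
  finally show ?case by simp
qed

lemma pair_pow:
  fixes x y :: real
  assumes "0 \<le> x" "0 \<le> y"
  shows "(x+y)*(x^m+y^m) \<le> 2*(x^Suc m + y^Suc m)"
proof -
  have "(x - y)*(x^m - y^m) \<ge> 0"
  proof (cases "x \<le> y")
    case True then have "x^m \<le> y^m" using assms by (intro power_mono) auto
    with True show ?thesis by (intro mult_nonpos_nonpos) auto
  next
    case False then have "y^m \<le> x^m" using assms by (intro power_mono) auto
    with False show ?thesis by (intro mult_nonneg_nonneg) auto
  qed
  then show ?thesis by (simp add: algebra_simps)
qed

lemma abel_bound:
  fixes e b :: "nat \<Rightarrow> real"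
  assumes n: "1 \<le> n" and e: "\<And>l. l \<le> n \<Longrightarrow> -d \<le> e l"
    and b: "\<And>l. 1 \<le> l \<Longrightarrow> l < n \<Longrightarrow> b l \<le> b (Suc l)" and b1: "0 \<le> b 1"
  shows "(\<Sum>l=1..n. (e l - e (l-1)) * b l) \<le> (e n + d) * b n"
proof -
  have "\<forall>m. 1 \<le> m \<longrightarrow> m \<le> n \<longrightarrow> (\<Sum>l=1..m. (e l - e (l-1)) * b l) \<le> (e m + d) * b m"
  proof (intro allI impI)
    fix m assume "1 \<le> m" "m \<le> n"
    then show "(\<Sum>l=1..m. (e l - e (l-1)) * b l) \<le> (e m + d) * b m"
    proof (induction m rule: nat_induct_at_least)
      case base
      have "-e 0 * b 1 \<le> d * b 1" using e[of 0] b1 by (intro mult_right_mono) auto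
      then show ?case by (simp add: algebra_simps)
    next
      case (Suc m)
      have IH: "(\<Sum>l=1..m. (e l - e (l-1)) * b l) \<le> (e m + d) * b m" using Suc by auto
      have "0 \<le> e m + d" using e[of m] Suc by auto
      moreover have "b m \<le> b (Suc m)" using b[of m] Suc by auto
      ultimately have "(e m + d) * b m \<le> (e m + d) * b (Suc m)" by (intro mult_left_mono)
      then show ?case using IH Suc by (simp add: algebra_simps)
    qed
  qed
  then show ?thesis using n by auto
qed

lemma riemann_bound:
  fixes a h e :: real
  assumes "0 < a" "0 \<le> h" "0 \<le> e" "1 \<le> k"
  shows "(\<Sum>l=1..n. h * (e + a*real(l-1)*h)^(k-1)) \<le> (e + a*real n*h)^k/(a*real k)"
proof (induction n)
  case 0 then show ?case using assms by simp
next
  case (Suc n)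
  define u where "u = e + a*real n*h"
  have u0: "0 \<le> u" using assms by (simp add: u_def)
  have "real k * u^(k-1) * (a*h) \<le> (u+a*h)^k - u^k" using bern[OF u0, of "a*h"] assms by auto
  hence "h * u^(k-1) \<le> ((u+a*h)^k - u^k)/(a*real k)"
    using assms by (simp add: field_simps)
  moreover have "u + a*h = e + a*real (Suc n)*h" by (simp add: u_def algebra_simps)
  moreover have eq: "(\<Sum>l=1..Suc n. h * (e + a*real(l-1)*h)^(k-1)) =
      (\<Sum>l=1..n. h * (e + a*real(l-1)*h)^(k-1)) + h * u^(k-1)"
    by (simp add: u_def)
  ultimately have b: "h * u^(k-1) \<le> (e + a*real (Suc n)*h)^k/(a*real k) - u^k/(a*real k)"
    by (simp add: diff_divide_distrib)
  have IH': "(\<Sum>l=1..n. h * (e + a*real(l-1)*h)^(k-1)) \<le> u^k/(a*real k)"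
    using Suc.IH by (simp add: u_def)
  show ?case using b IH' eq by linarith
qed

lemma final_arith:
  fixes p q \<epsilon> :: real and k B :: nat
  assumes "0 \<le> p" "0 \<le> q" "p + q = 1" "0 \<le> \<epsilon>" "1 \<le> k" "k \<le> B" "1 - 10*real B*\<epsilon> > 0"
  shows "(p+2*\<epsilon>)^k + real k*\<epsilon>*(p+2*\<epsilon>)^(k-1) + ((q+2*\<epsilon>)^k + real k*\<epsilon>*(q+2*\<epsilon>)^(k-1))
     \<le> (p^k+q^k)/(1-10*real B*\<epsilon>)"
proof -
  define S where "S = (p+2*\<epsilon>)^k + (q+2*\<epsilon>)^k"
  define T where "T = p^k + q^k"
  define R where "R = (p+2*\<epsilon>)^(k-1) + (q+2*\<epsilon>)^(k-1)"
  have R0: "0 \<le> R" using assms by (simp add: R_def)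
  have T0: "0 \<le> T" using assms by (simp add: T_def)
  have kk: "Suc (k-1) = k" using assms by simp
  have "((p+2*\<epsilon>)+(q+2*\<epsilon>))*R \<le> 2*S"
    using pair_pow[of "p+2*\<epsilon>" "q+2*\<epsilon>" "k-1"] assms unfolding R_def S_def kk by auto
  moreover have "R \<le> ((p+2*\<epsilon>)+(q+2*\<epsilon>))*R" using assms R0 by (simp add: mult_le_cancel_right1)
  ultimately have RS: "R \<le> 2*S" by linarith
  have "(p+2*\<epsilon>)^k - p^k \<le> real k*(2*\<epsilon>)*(p+2*\<epsilon>)^(k-1)" using mvt_up assms by auto
  moreover have "(q+2*\<epsilon>)^k - q^k \<le> real k*(2*\<epsilon>)*(q+2*\<epsilon>)^(k-1)" using mvt_up assms by auto
  ultimately have "S \<le> T + 2*real k*\<epsilon>*R" unfolding S_def T_def R_def by (simp add: algebra_simps)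
  also have "\<dots> \<le> T + 4*real k*\<epsilon>*S"
  proof -
    have "(2*real k*\<epsilon>)*R \<le> (2*real k*\<epsilon>)*(2*S)" using RS assms by (intro mult_left_mono) auto
    then show ?thesis by simp
  qed
  finally have S1: "S*(1-4*real k*\<epsilon>) \<le> T" by (simp add: algebra_simps)
  have kB: "real k \<le> real B" using assms by simp
  have kpos: "1 - 10*real k*\<epsilon> > 0" using assms kB
    by (smt (verit) mult_right_mono)
  have "(real k*\<epsilon>)*R \<le> (real k*\<epsilon>)*(2*S)" using RS assms by (intro mult_left_mono) auto
  hence "real k*\<epsilon>*R \<le> 2*real k*\<epsilon>*S" by simp
  hence L: "S + real k*\<epsilon>*R \<le> S*(1+2*real k*\<epsilon>)" by (simp add: algebra_simps)
  have "S*(1+2*real k*\<epsilon>)*(1-10*real k*\<epsilon>) \<le> S*(1-4*real k*\<epsilon>)"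
  proof -
    have "0 \<le> S" using assms by (simp add: S_def)
    moreover have "(1+2*real k*\<epsilon>)*(1-10*real k*\<epsilon>) \<le> 1-4*real k*\<epsilon>"
      using assms by (simp add: algebra_simps)
    ultimately show ?thesis by (metis mult.assoc mult_left_mono)
  qed
  with S1 have "S*(1+2*real k*\<epsilon>)*(1-10*real k*\<epsilon>) \<le> T" by linarith
  hence "S*(1+2*real k*\<epsilon>) \<le> T/(1-10*real k*\<epsilon>)" using kpos by (simp add: field_simps)
  also have "\<dots> \<le> T/(1-10*real B*\<epsilon>)" using kpos assms T0 kB
    by (intro divide_left_mono) (auto intro!: mult_pos_pos simp: mult_right_mono)
  finally show ?thesis using L unfolding S_def R_def T_def by (simp add: algebra_simps)
qed




lemma (in prob_space) sets_box:
  fixes k :: nat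
  assumes Um: "U \<in> borel_measurable M" and V: "V \<in> sets borel"
    and Xm: "\<And>j. j<k \<Longrightarrow> X j \<in> borel_measurable M" and S: "\<And>j. j<k \<Longrightarrow> S j \<in> sets borel"
  shows "{\<omega>\<in>space M. U \<omega> \<in> V \<and> (\<forall>j<k. X j \<omega> \<in> S j)} \<in> sets M"
proof -
  have eq: "{\<omega>\<in>space M. U \<omega> \<in> V \<and> (\<forall>j<k. X j \<omega> \<in> S j)} =
     (U -` V \<inter> space M) \<inter> {\<omega>\<in>space M. \<forall>j\<in>{..<k}. X j \<omega> \<in> S j}" by auto
  have "{\<omega>\<in>space M. \<forall>j\<in>{..<k}. X j \<omega> \<in> S j} \<in> sets M"
  proof (rule sets.sets_Collect_finite_All)
    fix j assume "j \<in> {..<k}"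
    then have "X j -` S j \<inter> space M \<in> sets M" using Xm S by (intro measurable_sets) auto
    moreover have "X j -` S j \<inter> space M = {\<omega>\<in>space M. X j \<omega> \<in> S j}" by auto
    ultimately show "{\<omega>\<in>space M. X j \<omega> \<in> S j} \<in> sets M" by simp
  next
    show "finite {..<k}" by (rule finite_lessThan)
  qed
  moreover have "U -` V \<inter> space M \<in> sets M" using Um V by (intro measurable_sets)
  ultimately show ?thesis unfolding eq by auto
qed

lemma (in prob_space) sets_one:
  assumes "X \<in> borel_measurable M" "S \<in> sets borel"
  shows "{\<omega>\<in>space M. X \<omega> \<in> S} \<in> sets M"
proof -
  have "X -` S \<inter> space M \<in> sets M" using assms by (intro measurable_sets)
  moreover have "X -` S \<inter> space M = {\<omega>\<in>space M. X \<omega> \<in> S}" by auto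
  ultimately show ?thesis by simp
qed

lemma test1: "{c<..} \<inter> {..(x::real)} \<in> sets borel" "(UNIV::real set) \<in> sets borel" by auto




lemma (in prob_space) core_N:
  fixes X :: "nat \<Rightarrow> 'a \<Rightarrow> real" and U :: "'a \<Rightarrow> real" and G :: "real \<Rightarrow> real"
    and V :: "real set" and k N :: nat
  assumes k: "1 \<le> k" and c: "0 \<le> c" "c < 1" and \<delta>: "0 \<le> \<delta>" and N: "1 \<le> N"
    and Xm: "\<And>j. j < k \<Longrightarrow> X j \<in> borel_measurable M"
    and Um: "U \<in> borel_measurable M" and V: "V \<in> sets borel"
    and box: "\<And>S. (\<And>j. j<k \<Longrightarrow> S j \<in> sets borel) \<Longrightarrow>
       prob {\<omega>\<in>space M. U \<omega> \<in> V \<and> (\<forall>j<k. X j \<omega> \<in> S j)} =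
       prob {\<omega>\<in>space M. U \<omega> \<in> V} * (\<Prod>j<k. prob {\<omega>\<in>space M. X j \<omega> \<in> S j})"
    and approx: "\<And>j u. j < k \<Longrightarrow> \<bar>prob {\<omega>\<in>space M. X j \<omega> \<le> u} - G u\<bar> \<le> \<delta>"
    and Gmono: "mono G" and Gcont: "continuous_on UNIV G" and Glim: "(G \<longlongrightarrow> 1) at_top"
    and Gconc: "concave_on {0..} G" and G1: "G 0 \<le> 1"
  shows "prob {\<omega>\<in>space M. U \<omega> \<in> V \<and> (\<forall>i<k. \<forall>j<k. c * X i \<omega> < X j \<omega>)}
    \<le> prob {\<omega>\<in>space M. U \<omega> \<in> V} *
      (((1-c)*(1 - G 0) + (1 - G 0)/real N + 2*\<delta>)^k/(1-c)
       + real k*\<delta>*((1-c)*(1 - G 0) + (1 - G 0)/real N + 2*\<delta>)^(k-1))"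
proof -
  define p where "p = 1 - G 0"
  define h where "h = p / real N"
  define s where "s = (\<lambda>l::nat. G 0 + real l * h)"
  define a where "a = 1 - c"
  define \<pi> where "\<pi> = prob {\<omega>\<in>space M. U \<omega> \<in> V}"
  have p0: "0 \<le> p" using G1 p_def by simp
  have h0: "0 \<le> h" using p0 N by (simp add: h_def)
  have a0: "0 < a" using c by (simp add: a_def)
  have \<pi>0: "0 \<le> \<pi>" by (simp add: \<pi>_def)
  have sN: "s N = 1" using N by (simp add: s_def h_def p_def)
  have s0: "s 0 = G 0" by (simp add: s_def)
  have quant: "\<exists>z\<ge>0. G z = y" if y: "G 0 \<le> y" "y < 1" for y
  proof -
    from Glim y(2) have "eventually (\<lambda>x. G x > y) at_top" by (rule order_tendstoD)
    then obtain b where b: "\<And>x. x \<ge> b \<Longrightarrow> G x > y" by (auto simp: eventually_at_top_linorder)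
    define b' where "b' = max b 0"
    have "G b' > y" using b by (simp add: b'_def)
    have "\<exists>z. 0 \<le> z \<and> z \<le> b' \<and> G z = y"
    proof (rule IVT')
      show "G 0 \<le> y" using y by simp
      show "y \<le> G b'" using \<open>G b' > y\<close> by simp
      show "0 \<le> b'" by (simp add: b'_def)
      show "continuous_on {0..b'} G" using Gcont by (rule continuous_on_subset) simp
    qed
    then show ?thesis by auto
  qed
  define x where "x = (\<lambda>l. if l = 0 \<or> p = 0 then 0 else SOME z. 0 \<le> z \<and> G z = s l)"
  have x_prop: "0 \<le> x l \<and> G (x l) = s l" if l: "l < N" for l
  proof (cases "l = 0 \<or> p = 0")
    case True
    then show ?thesis by (auto simp: x_def s_def h_def)
  next
    case False
    then have "0 < p" "0 < l" using p0 by auto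
    have "h > 0" using \<open>0 < p\<close> N by (simp add: h_def)
    then have "real l * h < real N * h" using l by (intro mult_strict_right_mono) auto
    also have "real N * h = p" using N by (simp add: h_def)
    finally have "s l < 1" by (simp add: s_def p_def)
    moreover have "G 0 \<le> s l" using h0 by (simp add: s_def)
    ultimately obtain z where "0 \<le> z \<and> G z = s l" using quant by blast
    then have "0 \<le> (SOME z. 0 \<le> z \<and> G z = s l) \<and> G (SOME z. 0 \<le> z \<and> G z = s l) = s l"
      by (rule someI)
    then show ?thesis using False by (simp add: x_def)
  qed
  have x0: "x 0 = 0" by (simp add: x_def)
  have x_mono: "x l1 \<le> x l2" if "l1 \<le> l2" "l2 < N" for l1 l2
  proof (cases "l1 = 0 \<or> p = 0")
    case True
    then have "x l1 = 0" by (simp add: x_def)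
    then show ?thesis using x_prop[of l2] that by simp
  next
    case False
    then have "0 < p" using p0 by auto
    show ?thesis
    proof (rule ccontr)
      assume "\<not> x l1 \<le> x l2"
      then have "G (x l2) \<le> G (x l1)" by (intro monoD[OF Gmono]) simp
      moreover have "G (x l1) = s l1" using x_prop[of l1] that by simp
      moreover have "G (x l2) = s l2" using x_prop[of l2] that by simp
      ultimately have "s l2 \<le> s l1" by simp
      have "h > 0" using \<open>0 < p\<close> N by (simp add: h_def)
      with \<open>s l2 \<le> s l1\<close> have "l2 \<le> l1" by (simp add: s_def)
      then have "l1 = l2" using that by simp
      then show False using \<open>\<not> x l1 \<le> x l2\<close> by simp
    qed
  qed
  define Up where "Up = (\<lambda>l. if l < N then {..x l} else (UNIV::real set))"
  have Up_mono: "Up l1 \<subseteq> Up l2" if "l1 \<le> l2" for l1 l2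
    using x_mono[of l1 l2] that by (auto simp: Up_def)
  have Up_sets: "Up l \<in> sets borel" for l by (simp add: Up_def)
  have Up_prob: "\<bar>prob {\<omega>\<in>space M. X j \<omega> \<in> Up l} - s l\<bar> \<le> \<delta>" if "j < k" "l \<le> N" for j l
  proof (cases "l < N")
    case True
    then show ?thesis using approx[OF \<open>j<k\<close>, of "x l"] x_prop[OF True] by (simp add: Up_def)
  next
    case False
    then have "l = N" using that by simp
    then show ?thesis using sN \<delta> by (simp add: Up_def prob_space)
  qed
  have Up_down: "z \<in> Up l" if "y \<in> Up l" "z \<le> y" for y z l
    using that by (auto simp: Up_def split: if_splits)
  define K where "K = (\<lambda>l. {c * x (l-1)<..} \<inter> Up l)"
  define J where "J = (\<lambda>l. Up l - Up (l-1))"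
  define S where "S = (\<lambda>(i::nat) (l::nat) (j::nat). if j = i then J l else K l)"
  define Box where "Box = (\<lambda>i l. {\<omega>\<in>space M. U \<omega> \<in> V \<and> (\<forall>j<k. X j \<omega> \<in> S i l j)})"
  have S_sets: "S i l j \<in> sets borel" for i l j
    using Up_sets by (auto simp: S_def J_def K_def)
  have Box_sets: "Box i l \<in> sets M" for i l
    unfolding Box_def by (rule sets_box[OF Um V Xm S_sets])
  have cover: "{\<omega>\<in>space M. U \<omega> \<in> V \<and> (\<forall>i<k. \<forall>j<k. c * X i \<omega> < X j \<omega>)}
      \<subseteq> (\<Union>(i,l)\<in>{..<k}\<times>{1..N}. Box i l)"
  proof
    fix \<omega> assume "\<omega> \<in> {\<omega>\<in>space M. U \<omega> \<in> V \<and> (\<forall>i<k. \<forall>j<k. c * X i \<omega> < X j \<omega>)}"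
    then have \<omega>: "\<omega> \<in> space M" "U \<omega> \<in> V" and ij: "\<And>i j. i<k \<Longrightarrow> j<k \<Longrightarrow> c * X i \<omega> < X j \<omega>"
      by auto
    define m where "m = Max ((\<lambda>j. X j \<omega>) ` {..<k})"
    have "m \<in> (\<lambda>j. X j \<omega>) ` {..<k}" unfolding m_def using k by (intro Max_in) (auto simp: lessThan_empty_iff)
    then obtain i where i: "i < k" "X i \<omega> = m" by auto
    have imax: "X j \<omega> \<le> X i \<omega>" if "j < k" for j
      using that i unfolding m_def by (auto intro!: Max_ge)
    have cX: "c * X i \<omega> < X i \<omega>" using ij i by auto
    have Xpos: "0 < X i \<omega>"
    proof (rule ccontr)
      assume "\<not> 0 < X i \<omega>"
      then have "X i \<omega> * 1 \<le> X i \<omega> * c" using c by (intro mult_left_mono_neg) auto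
      then show False using cX by (simp add: mult.commute)
    qed
    define l where "l = (LEAST l. X i \<omega> \<in> Up l)"
    have inN: "X i \<omega> \<in> Up N" by (simp add: Up_def)
    have lin: "X i \<omega> \<in> Up l" unfolding l_def by (rule LeastI[of _ N]) (rule inN)
    have lN: "l \<le> N" unfolding l_def by (rule Least_le) (rule inN)
    have l0: "l \<noteq> 0"
    proof
      assume "l = 0"
      then have "X i \<omega> \<le> x 0" using lin N by (simp add: Up_def)
      then show False using Xpos x0 by simp
    qed
    have notin: "X i \<omega> \<notin> Up (l-1)" unfolding l_def
      by (rule not_less_Least) (use l0 in \<open>simp add: l_def[symmetric]\<close>)
    have xl: "x (l-1) < X i \<omega>" using notin lN l0 by (auto simp: Up_def split: if_splits)
    have "\<omega> \<in> Box i l"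
      unfolding Box_def
    proof (intro CollectI conjI allI impI \<omega>)
      fix j assume j: "j < k"
      show "X j \<omega> \<in> S i l j"
      proof (cases "j = i")
        case True then show ?thesis using lin notin by (simp add: S_def J_def)
      next
        case False
        have "X j \<omega> \<in> Up l" using Up_down[OF lin imax[OF j]] .
        moreover have "c * x (l-1) \<le> c * X i \<omega>" using xl c by (intro mult_left_mono) auto
        moreover have "c * X i \<omega> < X j \<omega>" using ij i j by auto
        ultimately show ?thesis using False by (simp add: S_def K_def)
      qed
    qed
    moreover have "(i,l) \<in> {..<k}\<times>{1..N}" using i lN l0 by auto
    ultimately show "\<omega> \<in> (\<Union>(i,l)\<in>{..<k}\<times>{1..N}. Box i l)" by blast
  qed
  define b where "b = (\<lambda>l::nat. ((2*\<delta> + h) + a * real (l-1) * h)^(k-1))"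
  have b0: "0 \<le> b l" for l using \<delta> h0 a0 by (simp add: b_def)
  have Kprob: "prob {\<omega>\<in>space M. X j \<omega> \<in> K l} \<le> (2*\<delta> + h) + a * real (l-1) * h"
    if j: "j<k" and l: "1 \<le> l" "l \<le> N" for j l
  proof -
    have xl1: "0 \<le> x (l-1) \<and> G (x (l-1)) = s (l-1)" using l by (intro x_prop) auto
    have "c * x (l-1) \<le> x (l-1)" using xl1 c by (intro mult_left_le_one_le) auto
    then have sub: "{..c * x (l-1)} \<subseteq> Up l"
      using x_mono[of "l-1" l] by (auto simp: Up_def)
    have eqK: "{\<omega>\<in>space M. X j \<omega> \<in> K l} =
        {\<omega>\<in>space M. X j \<omega> \<in> Up l} - {\<omega>\<in>space M. X j \<omega> \<in> {..c * x (l-1)}}"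
      using sub by (auto simp: K_def)
    have "prob {\<omega>\<in>space M. X j \<omega> \<in> K l} =
        prob {\<omega>\<in>space M. X j \<omega> \<in> Up l} - prob {\<omega>\<in>space M. X j \<omega> \<in> {..c * x (l-1)}}"
      unfolding eqK
      by (rule finite_measure_Diff) (use sub Xm[OF j] Up_sets in \<open>auto intro!: sets_one\<close>)
    also have "prob {\<omega>\<in>space M. X j \<omega> \<in> {..c * x (l-1)}} = prob {\<omega>\<in>space M. X j \<omega> \<le> c * x (l-1)}"
      by simp
    finally have eq: "prob {\<omega>\<in>space M. X j \<omega> \<in> K l} =
        prob {\<omega>\<in>space M. X j \<omega> \<in> Up l} - prob {\<omega>\<in>space M. X j \<omega> \<le> c * x (l-1)}" .
    have P1: "prob {\<omega>\<in>space M. X j \<omega> \<in> Up l} \<le> s l + \<delta>" using Up_prob[OF j l(2)] by simp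
    have P2: "prob {\<omega>\<in>space M. X j \<omega> \<le> c * x (l-1)} \<ge> G (c * x (l-1)) - \<delta>"
      using approx[OF j, of "c * x (l-1)"] by simp
    have "G ((1 - c) *\<^sub>R 0 + c *\<^sub>R x (l-1)) \<ge> (1 - c) * G 0 + c * G (x (l-1))"
      using xl1 c by (intro concave_onD[OF Gconc]) auto
    then have P3: "G (c * x (l-1)) \<ge> (1 - c) * G 0 + c * s (l-1)" using xl1 by simp
    have rl: "real l = real (l-1) + 1" using l by simp
    have "s l - ((1 - c) * G 0 + c * s (l-1)) = h + a * real (l-1) * h"
      unfolding s_def a_def rl by (simp add: algebra_simps)
    then show ?thesis using eq P1 P2 P3 by linarith
  qed
  have Boxprob: "prob (Box i l) \<le> \<pi> * (prob {\<omega>\<in>space M. X i \<omega> \<in> J l} * b l)"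
    if i: "i < k" and l: "1 \<le> l" "l \<le> N" for i l
  proof -
    have e1: "prob (Box i l) = \<pi> * (\<Prod>j<k. prob {\<omega>\<in>space M. X j \<omega> \<in> S i l j})"
      unfolding Box_def \<pi>_def by (rule box) (rule S_sets)
    have e2: "(\<Prod>j<k. prob {\<omega>\<in>space M. X j \<omega> \<in> S i l j}) =
        prob {\<omega>\<in>space M. X i \<omega> \<in> J l} * (\<Prod>j\<in>{..<k}-{i}. prob {\<omega>\<in>space M. X j \<omega> \<in> K l})"
    proof -
      have "(\<Prod>j<k. prob {\<omega>\<in>space M. X j \<omega> \<in> S i l j}) =
        prob {\<omega>\<in>space M. X i \<omega> \<in> S i l i} * (\<Prod>j\<in>{..<k}-{i}. prob {\<omega>\<in>space M. X j \<omega> \<in> S i l j})"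
        using i by (intro prod.remove) auto
      also have "(\<Prod>j\<in>{..<k}-{i}. prob {\<omega>\<in>space M. X j \<omega> \<in> S i l j}) =
          (\<Prod>j\<in>{..<k}-{i}. prob {\<omega>\<in>space M. X j \<omega> \<in> K l})"
        by (intro prod.cong) (auto simp: S_def)
      finally show ?thesis by (simp add: S_def)
    qed
    have "(\<Prod>j\<in>{..<k}-{i}. prob {\<omega>\<in>space M. X j \<omega> \<in> K l})
        \<le> (\<Prod>j\<in>{..<k}-{i}. (2*\<delta> + h) + a * real (l-1) * h)"
      by (intro prod_mono) (use Kprob l in auto)
    also have "\<dots> = b l" using i by (simp add: b_def card_Diff_singleton)
    finally have e3: "(\<Prod>j\<in>{..<k}-{i}. prob {\<omega>\<in>space M. X j \<omega> \<in> K l}) \<le> b l" .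
    have "prob {\<omega>\<in>space M. X i \<omega> \<in> J l} * (\<Prod>j\<in>{..<k}-{i}. prob {\<omega>\<in>space M. X j \<omega> \<in> K l})
        \<le> prob {\<omega>\<in>space M. X i \<omega> \<in> J l} * b l" using e3 by (intro mult_left_mono) auto
    then show ?thesis unfolding e1 e2 by (rule mult_left_mono) (rule \<pi>0)
  qed
  define W0 where "W0 = a*p + h + 2*\<delta>"
  have W00: "0 \<le> W0" using a0 p0 h0 \<delta> by (simp add: W0_def)
  have aNh: "a * real N * h = a * p" using N by (simp add: h_def)
  have per_i: "(\<Sum>l=1..N. prob {\<omega>\<in>space M. X i \<omega> \<in> J l} * b l) \<le> W0^k/(a*real k) + \<delta> * W0^(k-1)"
    if i: "i<k" for i
  proof -
    define \<Phi> where "\<Phi> = (\<lambda>l. prob {\<omega>\<in>space M. X i \<omega> \<in> Up l})"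
    define e where "e = (\<lambda>l. \<Phi> l - s l)"
    have Jeq: "prob {\<omega>\<in>space M. X i \<omega> \<in> J l} = h + (e l - e (l-1))" if l: "1 \<le> l" for l
    proof -
      have eqJ: "{\<omega>\<in>space M. X i \<omega> \<in> J l} = {\<omega>\<in>space M. X i \<omega> \<in> Up l} - {\<omega>\<in>space M. X i \<omega> \<in> Up (l-1)}"
        by (auto simp: J_def)
      have "prob {\<omega>\<in>space M. X i \<omega> \<in> J l} = \<Phi> l - \<Phi> (l-1)"
        unfolding eqJ \<Phi>_def
        by (rule finite_measure_Diff) (use Up_mono[of "l-1" l] Xm[OF i] Up_sets in \<open>auto intro!: sets_one\<close>)
      moreover have "s l - s (l-1) = h" using l by (simp add: s_def of_nat_diff algebra_simps)
      ultimately show ?thesis by (simp add: e_def)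
    qed
    have "(\<Sum>l=1..N. prob {\<omega>\<in>space M. X i \<omega> \<in> J l} * b l) = (\<Sum>l=1..N. h * b l + (e l - e (l-1)) * b l)"
      by (intro sum.cong) (auto simp: Jeq distrib_right)
    also have "\<dots> = (\<Sum>l=1..N. h * b l) + (\<Sum>l=1..N. (e l - e (l-1)) * b l)"
      by (rule sum.distrib)
    finally have split: "(\<Sum>l=1..N. prob {\<omega>\<in>space M. X i \<omega> \<in> J l} * b l) =
        (\<Sum>l=1..N. h * b l) + (\<Sum>l=1..N. (e l - e (l-1)) * b l)" .
    have R1: "(\<Sum>l=1..N. h * b l) \<le> ((2*\<delta>+h) + a*real N*h)^k/(a*real k)"
      unfolding b_def by (rule riemann_bound) (use a0 h0 \<delta> k in auto)
    have R2: "(\<Sum>l=1..N. (e l - e (l-1)) * b l) \<le> (e N + \<delta>) * b N"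
    proof (rule abel_bound)
      show "1 \<le> N" by (rule N)
      show "- \<delta> \<le> e l" if "l \<le> N" for l using Up_prob[OF i that] by (simp add: e_def \<Phi>_def)
      show "b l \<le> b (Suc l)" if "1 \<le> l" "l < N" for l
        unfolding b_def using a0 h0 \<delta> by (intro power_mono) (auto intro!: mult_right_mono)
      show "0 \<le> b 1" by (rule b0)
    qed
    have eN: "e N = 0"
    proof -
      have "{\<omega>\<in>space M. X i \<omega> \<in> Up N} = space M" by (auto simp: Up_def)
      then have "\<Phi> N = 1" by (simp add: \<Phi>_def prob_space)
      then show ?thesis using sN by (simp add: e_def)
    qed
    have bN: "b N \<le> W0^(k-1)"
    proof -
      have "a * real (N-1) * h \<le> a * real N * h" using a0 h0 by (intro mult_right_mono mult_left_mono) auto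
      then show ?thesis unfolding b_def W0_def using aNh a0 h0 \<delta> by (intro power_mono) auto
    qed
    have "(e N + \<delta>) * b N \<le> \<delta> * W0^(k-1)" using eN bN \<delta> by (simp add: mult_left_mono)
    moreover have "((2*\<delta>+h) + a*real N*h) = W0" using aNh by (simp add: W0_def)
    ultimately show ?thesis using split R1 R2 by simp
  qed
  have "prob {\<omega>\<in>space M. U \<omega> \<in> V \<and> (\<forall>i<k. \<forall>j<k. c * X i \<omega> < X j \<omega>)}
      \<le> prob (\<Union>(i,l)\<in>{..<k}\<times>{1..N}. Box i l)"
    by (rule finite_measure_mono[OF cover]) (auto intro!: sets.finite_UN simp: Box_sets)
  also have "\<dots> \<le> (\<Sum>il\<in>{..<k}\<times>{1..N}. prob ((\<lambda>(i,l). Box i l) il))"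
    by (rule finite_measure_subadditive_finite) (auto simp: Box_sets)
  also have "\<dots> = (\<Sum>(i,l)\<in>{..<k}\<times>{1..N}. prob (Box i l))"
    by (intro sum.cong) auto
  also have "\<dots> = (\<Sum>i<k. \<Sum>l=1..N. prob (Box i l))"
    by (simp add: sum.cartesian_product)
  also have "\<dots> \<le> (\<Sum>i<k. \<Sum>l=1..N. \<pi> * (prob {\<omega>\<in>space M. X i \<omega> \<in> J l} * b l))"
    by (intro sum_mono Boxprob) auto
  also have "\<dots> = (\<Sum>i<k. \<pi> * (\<Sum>l=1..N. prob {\<omega>\<in>space M. X i \<omega> \<in> J l} * b l))"
    by (simp add: sum_distrib_left)
  also have "\<dots> \<le> (\<Sum>i<k. \<pi> * (W0^k/(a*real k) + \<delta> * W0^(k-1)))"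
    by (intro sum_mono mult_left_mono per_i \<pi>0) auto
  also have "\<dots> = \<pi> * (W0^k/a + real k * \<delta> * W0^(k-1))"
    using k a0 by (simp add: field_simps)
  finally show ?thesis unfolding W0_def a_def p_def h_def \<pi>_def by simp
qed



lemma (in prob_space) core:
  fixes X :: "nat \<Rightarrow> 'a \<Rightarrow> real" and U :: "'a \<Rightarrow> real" and G :: "real \<Rightarrow> real"
    and V :: "real set" and k :: nat
  assumes k: "1 \<le> k" and c: "0 \<le> c" "c < 1" and \<delta>: "0 \<le> \<delta>"
    and Xm: "\<And>j. j < k \<Longrightarrow> X j \<in> borel_measurable M"
    and Um: "U \<in> borel_measurable M" and V: "V \<in> sets borel"
    and box: "\<And>S. (\<And>j. j<k \<Longrightarrow> S j \<in> sets borel) \<Longrightarrow>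
       prob {\<omega>\<in>space M. U \<omega> \<in> V \<and> (\<forall>j<k. X j \<omega> \<in> S j)} =
       prob {\<omega>\<in>space M. U \<omega> \<in> V} * (\<Prod>j<k. prob {\<omega>\<in>space M. X j \<omega> \<in> S j})"
    and approx: "\<And>j u. j < k \<Longrightarrow> \<bar>prob {\<omega>\<in>space M. X j \<omega> \<le> u} - G u\<bar> \<le> \<delta>"
    and Gmono: "mono G" and Gcont: "continuous_on UNIV G" and Glim: "(G \<longlongrightarrow> 1) at_top"
    and Gconc: "concave_on {0..} G" and G1: "G 0 \<le> 1"
  shows "prob {\<omega>\<in>space M. U \<omega> \<in> V \<and> (\<forall>i<k. \<forall>j<k. c * X i \<omega> < X j \<omega>)}
    \<le> prob {\<omega>\<in>space M. U \<omega> \<in> V} *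
      (((1-c)*(1 - G 0) + 2*\<delta>)^k/(1-c)
       + real k*\<delta>*((1-c)*(1 - G 0) + 2*\<delta>)^(k-1))"
proof -
  define f where "f = (\<lambda>n::nat. prob {\<omega>\<in>space M. U \<omega> \<in> V} *
      (((1-c)*(1 - G 0) + (1 - G 0)/real n + 2*\<delta>)^k/(1-c)
       + real k*\<delta>*((1-c)*(1 - G 0) + (1 - G 0)/real n + 2*\<delta>)^(k-1)))"
  have "f \<longlonglongrightarrow> prob {\<omega>\<in>space M. U \<omega> \<in> V} *
      (((1-c)*(1 - G 0) + 0 + 2*\<delta>)^k/(1-c)
       + real k*\<delta>*((1-c)*(1 - G 0) + 0 + 2*\<delta>)^(k-1))"
    unfolding f_def using c by (intro tendsto_intros) auto
  then have lim: "f \<longlonglongrightarrow> prob {\<omega>\<in>space M. U \<omega> \<in> V} *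
      (((1-c)*(1 - G 0) + 2*\<delta>)^k/(1-c)
       + real k*\<delta>*((1-c)*(1 - G 0) + 2*\<delta>)^(k-1))" by simp
  show ?thesis
  proof (rule LIMSEQ_le_const[OF lim], intro exI allI impI)
    fix n :: nat assume "1 \<le> n"
    then show "prob {\<omega>\<in>space M. U \<omega> \<in> V \<and> (\<forall>i<k. \<forall>j<k. c * X i \<omega> < X j \<omega>)} \<le> f n"
      unfolding f_def
      by (rule core_N[OF k c \<delta> _ Xm Um V box approx Gmono Gcont Glim Gconc G1]) auto
  qed
qed

lemma (in prob_space) box_from_indep:
  fixes \<theta> :: "nat \<Rightarrow> 'a \<Rightarrow> real" and k :: nat
  assumes ind: "indep_vars (\<lambda>_. borel) (\<lambda>i. case i of None \<Rightarrow> U | Some j \<Rightarrow> \<theta> j) (insert None (Some ` {..<k}))"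
    and V: "V \<in> sets borel" and T: "\<And>j. j<k \<Longrightarrow> T j \<in> sets borel"
  shows "prob {\<omega>\<in>space M. U \<omega> \<in> V \<and> (\<forall>j<k. \<theta> j \<omega> \<in> T j)} =
     prob {\<omega>\<in>space M. U \<omega> \<in> V} * (\<Prod>j<k. prob {\<omega>\<in>space M. \<theta> j \<omega> \<in> T j})"
proof -
  let ?Y = "\<lambda>i. case i of None \<Rightarrow> U | Some j \<Rightarrow> \<theta> j"
  let ?I = "insert None (Some ` {..<k})"
  have isets: "indep_sets (\<lambda>i. { ?Y i -` A \<inter> space M | A. A \<in> sets borel}) ?I"
    using ind unfolding indep_vars_def2 by auto
  define A where "A = (\<lambda>i. case i of None \<Rightarrow> U -` V \<inter> space M | Some j \<Rightarrow> \<theta> j -` T j \<inter> space M)"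
  have "prob (\<Inter>i\<in>?I. A i) = (\<Prod>i\<in>?I. prob (A i))"
  proof (rule indep_setsD[OF isets])
    show "\<forall>j\<in>?I. A j \<in> {?Y j -` Aa \<inter> space M |Aa. Aa \<in> sets borel}"
      using V T by (auto simp: A_def)
  qed auto
  moreover have "(\<Inter>i\<in>?I. A i) = {\<omega>\<in>space M. U \<omega> \<in> V \<and> (\<forall>j<k. \<theta> j \<omega> \<in> T j)}"
    by (auto simp: A_def)
  moreover have "(\<Prod>i\<in>?I. prob (A i)) = prob (A None) * (\<Prod>i\<in>Some ` {..<k}. prob (A i))"
    by (rule prod.insert) auto
  moreover have "(\<Prod>i\<in>Some ` {..<k}. prob (A i)) = (\<Prod>j<k. prob (A (Some j)))"
    by (subst prod.reindex) (auto simp: inj_on_def)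
  moreover have "A None = {\<omega>\<in>space M. U \<omega> \<in> V}" by (auto simp: A_def)
  moreover have "\<And>j. A (Some j) = {\<omega>\<in>space M. \<theta> j \<omega> \<in> T j}" by (auto simp: A_def)
  ultimately show ?thesis by simp
qed

lemma (in prob_space) sets_pairs:
  fixes k :: nat and X :: "nat \<Rightarrow> 'a \<Rightarrow> real"
  assumes Um: "U \<in> borel_measurable M" and V: "V \<in> sets borel"
    and Xm: "\<And>j. j<k \<Longrightarrow> X j \<in> borel_measurable M"
  shows "{\<omega>\<in>space M. U \<omega> \<in> V \<and> (\<forall>i<k. \<forall>j<k. c * X i \<omega> < X j \<omega>)} \<in> sets M"
proof -
  have eq: "{\<omega>\<in>space M. U \<omega> \<in> V \<and> (\<forall>i<k. \<forall>j<k. c * X i \<omega> < X j \<omega>)} =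
     (U -` V \<inter> space M) \<inter> {\<omega>\<in>space M. \<forall>i\<in>{..<k}. \<forall>j\<in>{..<k}. c * X i \<omega> < X j \<omega>}" by auto
  have "{\<omega>\<in>space M. \<forall>i\<in>{..<k}. \<forall>j\<in>{..<k}. c * X i \<omega> < X j \<omega>} \<in> sets M"
  proof (rule sets.sets_Collect_finite_All)
    fix i assume i: "i \<in> {..<k}"
    show "{\<omega>\<in>space M. \<forall>j\<in>{..<k}. c * X i \<omega> < X j \<omega>} \<in> sets M"
    proof (rule sets.sets_Collect_finite_All)
      fix j assume j: "j \<in> {..<k}"
      have "(\<lambda>\<omega>. c * X i \<omega>) \<in> borel_measurable M" using Xm i by auto
      moreover have "X j \<in> borel_measurable M" using Xm j by auto
      ultimately show "{\<omega>\<in>space M. c * X i \<omega> < X j \<omega>} \<in> sets M" by measurable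
    next
      show "finite {..<k}" by (rule finite_lessThan)
    qed
  next
    show "finite {..<k}" by (rule finite_lessThan)
  qed
  moreover have "U -` V \<inter> space M \<in> sets M" using Um V by (intro measurable_sets)
  ultimately show ?thesis unfolding eq by auto
qed




lemma miss_cases:
  fixes \<theta> :: "nat \<Rightarrow> real" and k :: nat
  assumes k: "1 \<le> k" and t: "0 \<le> t" and r: "0 < r" and miss: "\<theta>0 \<notin> ci_mode t k \<theta>"
  shows "(\<forall>i<k. \<forall>j<k. (t/(1+t)) * (r*(\<theta> i - \<theta>0)) < r*(\<theta> j - \<theta>0)) \<or>
         (\<forall>i<k. \<forall>j<k. (t/(1+t)) * (-(r*(\<theta> i - \<theta>0))) < -(r*(\<theta> j - \<theta>0)))"
proof -
  define m where "m = est_min k \<theta>"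
  define M where "M = est_max k \<theta>"
  have mle: "m \<le> \<theta> j" if "j<k" for j unfolding m_def est_min_def using that by (intro Min_le) auto
  have Mge: "\<theta> j \<le> M" if "j<k" for j unfolding M_def est_max_def using that by (intro Max_ge) auto
  have conv: "(t/(1+t)) * (r*x) < r*y" if "t*x < (1+t)*y" for x y
  proof -
    have "r*(t*x) < r*((1+t)*y)" using that r by simp
    then show ?thesis using t by (simp add: field_simps)
  qed
  from miss have "\<theta>0 < m - t*(M-m) \<or> M + t*(M-m) < \<theta>0" unfolding ci_mode_def m_def M_def by auto
  then show ?thesis
  proof
    assume h: "\<theta>0 < m - t*(M-m)"
    have "\<forall>i<k. \<forall>j<k. (t/(1+t)) * (r*(\<theta> i - \<theta>0)) < r*(\<theta> j - \<theta>0)"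
    proof (intro allI impI conv)
      fix i j assume "i<k" "j<k"
      have "t*(\<theta> i - \<theta>0) \<le> t*(M-\<theta>0)" using Mge[OF \<open>i<k\<close>] t by (intro mult_left_mono) auto
      moreover have "(1+t)*(m - \<theta>0) \<le> (1+t)*(\<theta> j - \<theta>0)" using mle[OF \<open>j<k\<close>] t by (intro mult_left_mono) auto
      moreover have "t*(M-\<theta>0) < (1+t)*(m-\<theta>0)" using h by (simp add: algebra_simps)
      ultimately show "t*(\<theta> i - \<theta>0) < (1+t)*(\<theta> j - \<theta>0)" by linarith
    qed
    then show ?thesis by blast
  next
    assume h: "M + t*(M-m) < \<theta>0"
    have "\<forall>i<k. \<forall>j<k. (t/(1+t)) * (r*(\<theta>0 - \<theta> i)) < r*(\<theta>0 - \<theta> j)"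
    proof (intro allI impI conv)
      fix i j assume "i<k" "j<k"
      have "t*(\<theta>0 - \<theta> i) \<le> t*(\<theta>0 - m)" using mle[OF \<open>i<k\<close>] t by (intro mult_left_mono) auto
      moreover have "(1+t)*(\<theta>0 - M) \<le> (1+t)*(\<theta>0 - \<theta> j)" using Mge[OF \<open>j<k\<close>] t by (intro mult_left_mono) auto
      moreover have "t*(\<theta>0 - m) < (1+t)*(\<theta>0 - M)" using h by (simp add: algebra_simps)
      ultimately show "t*(\<theta>0 - \<theta> i) < (1+t)*(\<theta>0 - \<theta> j)" by linarith
    qed
    then show ?thesis by (simp add: algebra_simps)
  qed
qed

lemma arith2:
  fixes a \<delta> p q :: real and k B :: nat
  assumes a: "0 < a" "a \<le> 1" and \<delta>: "0 \<le> \<delta>" and pq: "0 \<le> p" "0 \<le> q" "p+q = 1"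
    and kB: "1 \<le> k" "k \<le> B" and D: "1 - 10*real B*(\<delta>/a) > 0"
  shows "((a*p + 2*\<delta>)^k/a + real k*\<delta>*(a*p + 2*\<delta>)^(k-1)) + ((a*q + 2*\<delta>)^k/a + real k*\<delta>*(a*q + 2*\<delta>)^(k-1))
     \<le> (p^k+q^k)*a^(k-1) / (1 - 10*real B*(\<delta>/a))"
proof -
  define \<epsilon> where "\<epsilon> = \<delta>/a"
  have \<epsilon>0: "0 \<le> \<epsilon>" using a \<delta> by (simp add: \<epsilon>_def)
  have d\<epsilon>: "\<delta> = a*\<epsilon>" using a by (simp add: \<epsilon>_def)
  have kk: "a^k = a * a^(k-1)" using kB by (metis Suc_diff_le diff_Suc_1 power_Suc)
  have one: "(a*x + 2*\<delta>)^k/a + real k*\<delta>*(a*x+2*\<delta>)^(k-1)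
      \<le> a^(k-1) * ((x+2*\<epsilon>)^k + real k*\<epsilon>*(x+2*\<epsilon>)^(k-1))" if x: "0 \<le> x" for x
  proof -
    have e: "a*x + 2*\<delta> = a*(x+2*\<epsilon>)" by (simp add: d\<epsilon> algebra_simps)
    have 1: "(a*(x+2*\<epsilon>))^k/a = a^(k-1)*(x+2*\<epsilon>)^k"
      using a by (simp add: power_mult_distrib kk)
    have 2: "real k*\<delta>*(a*(x+2*\<epsilon>))^(k-1) = a * (a^(k-1)*(real k*\<epsilon>*(x+2*\<epsilon>)^(k-1)))"
      by (simp add: d\<epsilon> power_mult_distrib)
    have "0 \<le> a^(k-1)*(real k*\<epsilon>*(x+2*\<epsilon>)^(k-1))" using a \<epsilon>0 x by simp
    then have 3: "a * (a^(k-1)*(real k*\<epsilon>*(x+2*\<epsilon>)^(k-1))) \<le> a^(k-1)*(real k*\<epsilon>*(x+2*\<epsilon>)^(k-1))"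
      using a by (intro mult_left_le_one_le) auto
    show ?thesis unfolding e 1 2 using 3 by (simp add: algebra_simps)
  qed
  have "((a*p + 2*\<delta>)^k/a + real k*\<delta>*(a*p + 2*\<delta>)^(k-1)) + ((a*q + 2*\<delta>)^k/a + real k*\<delta>*(a*q + 2*\<delta>)^(k-1))
     \<le> a^(k-1) * (((p+2*\<epsilon>)^k + real k*\<epsilon>*(p+2*\<epsilon>)^(k-1)) + ((q+2*\<epsilon>)^k + real k*\<epsilon>*(q+2*\<epsilon>)^(k-1)))"
    using one[OF pq(1)] one[OF pq(2)] by (simp add: algebra_simps)
  also have "\<dots> \<le> a^(k-1) * ((p^k+q^k)/(1-10*real B*\<epsilon>))"
    using final_arith[OF pq \<epsilon>0 kB] D a by (intro mult_left_mono) (auto simp: \<epsilon>_def)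
  finally show ?thesis by (simp add: \<epsilon>_def mult.commute)
qed

lemma hulcQ_eq:
  assumes "0 \<le> t"
  shows "hulcQ n t \<Delta> = hulcP n \<Delta> * (1+t) / (1+t)^n"
proof -
  have "(1+t) powi (1 - int n) = (1+t) powi 1 / (1+t) powi (int n)"
    using assms by (intro power_int_diff) auto
  then show ?thesis by (simp add: hulcQ_def)
qed

lemma hulcB_facts:
  fixes \<alpha> t \<Delta> :: real
  assumes "0 < \<alpha>" "\<alpha> < 1" "0 \<le> t" "0 \<le> \<Delta>" "\<Delta> \<le> 1/2" "0 < t \<or> \<Delta> < 1/2"
  shows "2 \<le> hulcB \<alpha> t \<Delta>" "hulcQ (hulcB \<alpha> t \<Delta>) t \<Delta> \<le> \<alpha>" "\<alpha> < hulcQ (hulcB \<alpha> t \<Delta> - 1) t \<Delta>"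
proof -
  define \<rho> where "\<rho> = (1/2 + \<Delta>)/(1+t)"
  have \<rho>0: "0 \<le> \<rho>" using assms by (simp add: \<rho>_def)
  have \<rho>1: "\<rho> < 1" using assms by (auto simp: \<rho>_def field_simps)
  have Qle: "hulcQ n t \<Delta> \<le> 2*(1+t)*\<rho>^n" for n
  proof -
    have "(1/2-\<Delta>)^n \<le> (1/2+\<Delta>)^n" using assms by (intro power_mono) auto
    then have "hulcP n \<Delta> \<le> 2*(1/2+\<Delta>)^n" by (simp add: hulcP_def)
    then have "hulcP n \<Delta> * (1+t) / (1+t)^n \<le> 2*(1/2+\<Delta>)^n * (1+t) / (1+t)^n"
      using assms by (intro divide_right_mono mult_right_mono) auto
    also have "\<dots> = 2*(1+t)*\<rho>^n" by (simp add: \<rho>_def power_divide)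
    finally show ?thesis using hulcQ_eq assms by simp
  qed
  have "\<alpha>/(2*(1+t)) > 0" using assms by simp
  from real_arch_pow_inv[OF this \<rho>1] obtain n0 where n0: "\<rho>^n0 < \<alpha>/(2*(1+t))" by blast
  have "\<rho>^(Suc n0) \<le> \<rho>^n0" using \<rho>0 \<rho>1 by (intro power_decreasing) auto
  then have B: "2*(1+t)*\<rho>^(Suc n0) \<le> 2*(1+t)*\<rho>^n0" using assms by (intro mult_left_mono) auto
  have A: "2*(1+t)*\<rho>^n0 < \<alpha>" using n0 assms by (simp add: field_simps)
  from A B have "2*(1+t)*\<rho>^(Suc n0) \<le> \<alpha>" by linarith
  then have ex: "1 \<le> Suc n0 \<and> hulcQ (Suc n0) t \<Delta> \<le> \<alpha>" using Qle[of "Suc n0"] by simp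
  have BI: "1 \<le> hulcB \<alpha> t \<Delta> \<and> hulcQ (hulcB \<alpha> t \<Delta>) t \<Delta> \<le> \<alpha>"
    unfolding hulcB_def by (rule LeastI[of _ "Suc n0"]) (rule ex)
  then show "hulcQ (hulcB \<alpha> t \<Delta>) t \<Delta> \<le> \<alpha>" by simp
  have Q1: "hulcQ 1 t \<Delta> = 1" by (simp add: hulcQ_def hulcP_def)
  have Q0: "hulcQ 0 t \<Delta> > \<alpha>" using assms by (simp add: hulcQ_def hulcP_def)
  show B2: "2 \<le> hulcB \<alpha> t \<Delta>"
  proof (rule ccontr)
    assume "\<not> 2 \<le> hulcB \<alpha> t \<Delta>"
    then have "hulcB \<alpha> t \<Delta> = 1" using BI by simp
    then show False using BI Q1 assms by simp
  qed
  have lt: "hulcB \<alpha> t \<Delta> - 1 < (LEAST B. 1 \<le> B \<and> hulcQ B t \<Delta> \<le> \<alpha>)"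
    using B2 unfolding hulcB_def by simp
  have "\<not> (1 \<le> hulcB \<alpha> t \<Delta> - 1 \<and> hulcQ (hulcB \<alpha> t \<Delta> - 1) t \<Delta> \<le> \<alpha>)"
    by (rule not_less_Least[OF lt])
  then show "\<alpha> < hulcQ (hulcB \<alpha> t \<Delta> - 1) t \<Delta>" using B2 by auto
qed




lemma (in prob_space) box_transform:
  fixes \<theta> :: "nat \<Rightarrow> 'a \<Rightarrow> real" and k :: nat and f :: "real \<Rightarrow> real"
  assumes ind: "indep_vars (\<lambda>_. borel) (\<lambda>i. case i of None \<Rightarrow> U | Some j \<Rightarrow> \<theta> j) (insert None (Some ` {..<k}))"
    and f: "f \<in> borel_measurable borel" and V: "V \<in> sets borel" and S: "\<And>j. j<k \<Longrightarrow> S j \<in> sets borel"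
  shows "prob {\<omega>\<in>space M. U \<omega> \<in> V \<and> (\<forall>j<k. f (\<theta> j \<omega>) \<in> S j)} =
     prob {\<omega>\<in>space M. U \<omega> \<in> V} * (\<Prod>j<k. prob {\<omega>\<in>space M. f (\<theta> j \<omega>) \<in> S j})"
proof -
  have T: "f -` S j \<in> sets borel" if "j<k" for j
    using measurable_sets[OF f S[OF that]] by simp
  have "prob {\<omega>\<in>space M. U \<omega> \<in> V \<and> (\<forall>j<k. \<theta> j \<omega> \<in> f -` S j)} =
     prob {\<omega>\<in>space M. U \<omega> \<in> V} * (\<Prod>j<k. prob {\<omega>\<in>space M. \<theta> j \<omega> \<in> f -` S j})"
    by (rule box_from_indep[OF ind V T])
  then show ?thesis by simp
qed

lemma (in prob_space) prob_neg_le: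
  fixes X :: "'a \<Rightarrow> real"
  assumes Xm: "X \<in> borel_measurable M" and at: "prob {\<omega>\<in>space M. X \<omega> = -u} = 0"
  shows "prob {\<omega>\<in>space M. -X \<omega> \<le> u} = 1 - prob {\<omega>\<in>space M. X \<omega> \<le> -u}"
proof -
  have "{\<omega>\<in>space M. X \<omega> \<in> {..-u}} \<in> sets M" "{\<omega>\<in>space M. X \<omega> \<in> {-u}} \<in> sets M"
    "{\<omega>\<in>space M. X \<omega> \<in> {..< -u}} \<in> sets M" by (rule sets_one[OF Xm], simp)+
  then have s1: "{\<omega>\<in>space M. X \<omega> \<le> -u} \<in> sets M" "{\<omega>\<in>space M. X \<omega> = -u} \<in> sets M"
    "{\<omega>\<in>space M. X \<omega> < -u} \<in> sets M" by simp_all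
  have e1: "{\<omega>\<in>space M. -X \<omega> \<le> u} = space M - {\<omega>\<in>space M. X \<omega> < -u}" by auto
  have r1: "prob {\<omega>\<in>space M. -X \<omega> \<le> u} = 1 - prob {\<omega>\<in>space M. X \<omega> < -u}"
    unfolding e1 by (rule prob_compl[OF s1(3)])
  have e2: "{\<omega>\<in>space M. X \<omega> < -u} = {\<omega>\<in>space M. X \<omega> \<le> -u} - {\<omega>\<in>space M. X \<omega> = -u}" by auto
  have r2: "prob {\<omega>\<in>space M. X \<omega> < -u} = prob {\<omega>\<in>space M. X \<omega> \<le> -u} - prob {\<omega>\<in>space M. X \<omega> = -u}"
    unfolding e2 by (rule finite_measure_Diff[OF s1(1) s1(2)]) auto
  show ?thesis using r1 r2 at by linarith
qed




theorem theorem4: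
  fixes M :: "'a measure" and N :: "'b measure"
    and U :: "'a \<Rightarrow> real"
    and \<theta>hat :: "nat \<Rightarrow> nat \<Rightarrow> 'a \<Rightarrow> real"
    and W :: "'b \<Rightarrow> real"
    and \<alpha> t \<Delta> \<theta>0 r \<delta> :: real
  assumes "0 < \<alpha>" "\<alpha> < 1" "0 \<le> t" "0 \<le> \<Delta>" "\<Delta> \<le> 1/2" "0 < t \<or> \<Delta> < 1/2"
    and "prob_space M"
    and U_unif: "distr M lborel U = uniform_measure lborel {0..1}"
    and indep: "\<And>k. k \<in> {hulcB \<alpha> t \<Delta> - 1, hulcB \<alpha> t \<Delta>} \<Longrightarrow>
        prob_space.indep_vars M (\<lambda>_. borel)
          (\<lambda>i. case i of None \<Rightarrow> U | Some j \<Rightarrow> \<theta>hat k j) (insert None (Some ` {..<k}))"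
    and cont: "\<And>k j x. k \<in> {hulcB \<alpha> t \<Delta> - 1, hulcB \<alpha> t \<Delta>} \<Longrightarrow> j < k \<Longrightarrow>
        measure M {\<omega> \<in> space M. \<theta>hat k j \<omega> = x} = 0"
    and "prob_space N" and W_meas: "W \<in> borel_measurable N"
    and W_cont: "\<And>x. measure N {w \<in> space N. W w = x} = 0"
    and W_unimodal: "unimodal_at_0 N W"
    and Delta_W: "\<Delta> = \<bar>1/2 - measure N {w \<in> space N. W w \<le> 0}\<bar>"
    and "0 < r" "0 \<le> \<delta>"
    and approx: "\<And>k j u. k \<in> {hulcB \<alpha> t \<Delta> - 1, hulcB \<alpha> t \<Delta>} \<Longrightarrow> j < k \<Longrightarrow>
        \<bar>measure M {\<omega> \<in> space M. r * (\<theta>hat k j \<omega> - \<theta>0) \<le> u}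
           - measure N {w \<in> space N. W w \<le> u}\<bar> \<le> \<delta>"
  shows "1 - 10 * real (hulcB \<alpha> t \<Delta>) * (1 + t) * \<delta> > 0 \<longrightarrow>
    measure M {\<omega> \<in> space M.
       \<theta>0 \<notin> ci_mode t (hulc_Bstar \<alpha> t \<Delta> (U \<omega>)) (\<lambda>j. \<theta>hat (hulc_Bstar \<alpha> t \<Delta> (U \<omega>)) j \<omega>)}
    \<le> \<alpha> / (1 - 10 * real (hulcB \<alpha> t \<Delta>) * (1 + t) * \<delta>)"
proof (intro impI)
  assume Dpos: "1 - 10 * real (hulcB \<alpha> t \<Delta>) * (1 + t) * \<delta> > 0"
  interpret prob_space M by fact
  interpret NN: prob_space N by fact
  define B where "B = hulcB \<alpha> t \<Delta>"
  define \<eta> where "\<eta> = hulc_eta \<alpha> t \<Delta>"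
  define D where "D = 1 - 10 * real B * (1+t) * \<delta>"
  define c where "c = t/(1+t)"
  have D0: "D > 0" using Dpos by (simp add: D_def B_def)
  have B2: "2 \<le> B" and QB: "hulcQ B t \<Delta> \<le> \<alpha>" and QB1: "\<alpha> < hulcQ (B-1) t \<Delta>"
    using hulcB_facts[OF assms(1-6)] by (simp_all add: B_def)
  have \<eta>_eq: "\<eta> = (hulcQ (B-1) t \<Delta> - \<alpha>)/(hulcQ (B-1) t \<Delta> - hulcQ B t \<Delta>)"
    by (simp add: \<eta>_def hulc_eta_def B_def Let_def)
  have \<eta>0: "0 \<le> \<eta>" unfolding \<eta>_eq using QB QB1 by (intro divide_nonneg_pos) auto
  have \<eta>1: "\<eta> \<le> 1" unfolding \<eta>_eq using QB QB1 by (simp add: divide_le_eq_1)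
  have mix: "\<eta> * hulcQ B t \<Delta> + (1-\<eta>) * hulcQ (B-1) t \<Delta> = \<alpha>"
  proof -
    have ne: "hulcQ (B-1) t \<Delta> - hulcQ B t \<Delta> \<noteq> 0" using QB QB1 by simp
    have "\<eta> * (hulcQ (B-1) t \<Delta> - hulcQ B t \<Delta>) = hulcQ (B-1) t \<Delta> - \<alpha>"
      unfolding \<eta>_eq using ne by simp
    then show ?thesis by (simp add: algebra_simps)
  qed
  define DW where "DW = distr N borel W"
  interpret RD: real_distribution DW unfolding DW_def using W_meas by simp
  have G_eq: "measure N {w\<in>space N. W w \<le> u} = cdf DW u" for u
  proof -
    have "cdf DW u = measure N (W -` {..u} \<inter> space N)"
      unfolding cdf_def2 DW_def using W_meas by (subst measure_distr) auto
    moreover have "W -` {..u} \<inter> space N = {w\<in>space N. W w \<le> u}" by auto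
    ultimately show ?thesis by simp
  qed
  define G where "G = cdf DW"
  have Gmono: "mono G" unfolding G_def by (intro monoI RD.cdf_nondecreasing)
  have Gcont: "continuous_on UNIV G"
  proof (intro continuous_at_imp_continuous_on ballI)
    fix x :: real
    have "measure DW {x} = measure N (W -` {x} \<inter> space N)"
      unfolding DW_def using W_meas by (subst measure_distr) auto
    also have "W -` {x} \<inter> space N = {w\<in>space N. W w = x}" by auto
    finally have "measure DW {x} = 0" using W_cont by simp
    then show "isCont G x" unfolding G_def using RD.isCont_cdf by simp
  qed
  have Glim: "(G \<longlongrightarrow> 1) at_top" unfolding G_def by (rule RD.cdf_lim_at_top_prob)
  have Glimb: "(G \<longlongrightarrow> 0) at_bot" unfolding G_def by (rule RD.cdf_lim_at_bot)
  have G01: "0 \<le> G u" "G u \<le> 1" for u unfolding G_def by (simp_all add: RD.cdf_nonneg RD.cdf_bounded_prob)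
  have GW: "(\<lambda>x. measure N {w \<in> space N. W w \<le> x}) = G" by (simp add: G_eq G_def)
  have Gconc: "concave_on {0..} G" and Gconv: "convex_on {..0} G"
    using W_unimodal unfolding unimodal_at_0_def Let_def GW by simp_all
  define G' where "G' = (\<lambda>u. 1 - G (-u))"
  have G'mono: "mono G'"
  proof (rule monoI)
    fix x y :: real assume "x \<le> y"
    then have "G (-y) \<le> G (-x)" by (intro monoD[OF Gmono]) simp
    then show "G' x \<le> G' y" by (simp add: G'_def)
  qed
  have G'cont: "continuous_on UNIV G'" unfolding G'_def
    by (intro continuous_intros continuous_on_compose2[OF Gcont]) auto
  have G'lim: "(G' \<longlongrightarrow> 1) at_top"
  proof -
    have "((\<lambda>u. G (-u)) \<longlongrightarrow> 0) at_top"
      by (rule filterlim_compose[OF Glimb filterlim_uminus_at_bot_at_top])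
    then have "((\<lambda>u. 1 - G (-u)) \<longlongrightarrow> 1 - 0) at_top" by (intro tendsto_intros)
    then show ?thesis by (simp add: G'_def)
  qed
  have G'conc: "concave_on {0..} G'"
    unfolding concave_on_iff
  proof (intro conjI ballI allI impI)
    show "convex {0::real..}" by simp
    fix x y :: real and u v :: real
    assume xy: "x \<in> {0..}" "y \<in> {0..}" and uv: "0 \<le> u" "0 \<le> v" "u + v = 1"
    have "G ((1-v) *\<^sub>R (-x) + v *\<^sub>R (-y)) \<le> (1-v) * G (-x) + v * G (-y)"
      by (rule convex_onD[OF Gconv]) (use xy uv in auto)
    moreover have "1 - v = u" using uv by simp
    ultimately have "G (u *\<^sub>R (-x) + v *\<^sub>R (-y)) \<le> u * G (-x) + v * G (-y)" by simp
    moreover have "u *\<^sub>R (-x) + v *\<^sub>R (-y) = -(u * x + v * y)" by simp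
    ultimately have "G (-(u * x + v * y)) \<le> u * G (-x) + v * G (-y)" by simp
    then show "u * G' x + v * G' y \<le> G' (u *\<^sub>R x + v *\<^sub>R y)"
      using uv unfolding G'_def by (simp add: algebra_simps)
  qed
  have G'1: "G' 0 \<le> 1" using G01 by (simp add: G'_def)
  define Ep where "Ep = (\<lambda>k V. {\<omega>\<in>space M. U \<omega> \<in> V \<and>
     (\<forall>i<k. \<forall>j<k. c * (r*(\<theta>hat k i \<omega> - \<theta>0)) < r*(\<theta>hat k j \<omega> - \<theta>0))})"
  define Em where "Em = (\<lambda>k V. {\<omega>\<in>space M. U \<omega> \<in> V \<and>
     (\<forall>i<k. \<forall>j<k. c * (-(r*(\<theta>hat k i \<omega> - \<theta>0))) < -(r*(\<theta>hat k j \<omega> - \<theta>0)))})"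
  have c0: "0 \<le> c" "c < 1" using assms(3) by (auto simp: c_def field_simps)
  have a_eq: "1 - c = 1/(1+t)" using assms(3) by (simp add: c_def field_simps)
  have meas: "U \<in> borel_measurable M \<and> (\<forall>j<k. \<theta>hat k j \<in> borel_measurable M)"
    if kin: "k \<in> {hulcB \<alpha> t \<Delta> - 1, hulcB \<alpha> t \<Delta>}" for k
  proof -
    have rv: "\<forall>i\<in>insert None (Some ` {..<k}). random_variable borel (case i of None \<Rightarrow> U | Some j \<Rightarrow> \<theta>hat k j)"
      using indep[OF kin] unfolding indep_vars_def2 by blast
    have "U \<in> borel_measurable M" using rv by auto
    moreover have "\<theta>hat k j \<in> borel_measurable M" if "j<k" for j
    proof -
      have "Some j \<in> insert None (Some ` {..<k})" using that by auto
      with rv show ?thesis by force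
    qed
    ultimately show ?thesis by auto
  qed
  have Um: "U \<in> borel_measurable M" using meas[of "hulcB \<alpha> t \<Delta>"] by simp
  have perk: "prob (Ep k V) + prob (Em k V) \<le> prob {\<omega>\<in>space M. U \<omega> \<in> V} * (hulcQ k t \<Delta> / D)"
    if k: "k = B - 1 \<or> k = B" and V: "V \<in> sets borel" for k V
  proof -
    have kin: "k \<in> {hulcB \<alpha> t \<Delta> - 1, hulcB \<alpha> t \<Delta>}" using k by (auto simp: B_def)
    have k1: "1 \<le> k" using k B2 by auto
    have kB: "k \<le> B" using k by auto
    have ind: "indep_vars (\<lambda>_. borel) (\<lambda>i. case i of None \<Rightarrow> U | Some j \<Rightarrow> \<theta>hat k j) (insert None (Some ` {..<k}))"
      using indep[OF kin] .
    have \<theta>m: "\<theta>hat k j \<in> borel_measurable M" if "j < k" for j using meas[OF kin] that by auto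
    define X where "X = (\<lambda>j \<omega>. r*(\<theta>hat k j \<omega> - \<theta>0))"
    define Y where "Y = (\<lambda>j \<omega>. -(r*(\<theta>hat k j \<omega> - \<theta>0)))"
    have Xm: "X j \<in> borel_measurable M" if "j<k" for j
    proof -
      note [measurable] = \<theta>m[OF that]
      show ?thesis unfolding X_def by measurable
    qed
    have Ym: "Y j \<in> borel_measurable M" if "j<k" for j
    proof -
      note [measurable] = \<theta>m[OF that]
      show ?thesis unfolding Y_def by measurable
    qed
    have f1: "(\<lambda>y. r*(y - \<theta>0)) \<in> borel_measurable borel" by measurable
    have f2: "(\<lambda>y. -(r*(y - \<theta>0))) \<in> borel_measurable borel" by measurable
    have boxX: "prob {\<omega>\<in>space M. U \<omega> \<in> V \<and> (\<forall>j<k. X j \<omega> \<in> S j)} =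
       prob {\<omega>\<in>space M. U \<omega> \<in> V} * (\<Prod>j<k. prob {\<omega>\<in>space M. X j \<omega> \<in> S j})"
      if "\<And>j. j<k \<Longrightarrow> S j \<in> sets borel" for S
      unfolding X_def by (rule box_transform[OF ind f1 V that])
    have boxY: "prob {\<omega>\<in>space M. U \<omega> \<in> V \<and> (\<forall>j<k. Y j \<omega> \<in> S j)} =
       prob {\<omega>\<in>space M. U \<omega> \<in> V} * (\<Prod>j<k. prob {\<omega>\<in>space M. Y j \<omega> \<in> S j})"
      if "\<And>j. j<k \<Longrightarrow> S j \<in> sets borel" for S
      unfolding Y_def by (rule box_transform[OF ind f2 V that])
    have apX: "\<bar>prob {\<omega>\<in>space M. X j \<omega> \<le> u} - G u\<bar> \<le> \<delta>" if "j<k" for j u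
      using approx[OF kin that, of u] by (simp add: X_def G_def G_eq)
    have apY: "\<bar>prob {\<omega>\<in>space M. Y j \<omega> \<le> u} - G' u\<bar> \<le> \<delta>" if j: "j<k" for j u
    proof -
      have "{\<omega>\<in>space M. X j \<omega> = -u} = {\<omega>\<in>space M. \<theta>hat k j \<omega> = \<theta>0 - u/r}"
        using \<open>0 < r\<close> by (auto simp: X_def field_simps)
      then have at: "prob {\<omega>\<in>space M. X j \<omega> = -u} = 0" using cont[OF kin j] by simp
      have "prob {\<omega>\<in>space M. Y j \<omega> \<le> u} = prob {\<omega>\<in>space M. -X j \<omega> \<le> u}"
        by (simp add: X_def Y_def)
      also have "\<dots> = 1 - prob {\<omega>\<in>space M. X j \<omega> \<le> -u}" by (rule prob_neg_le[OF Xm[OF j] at])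
      finally show ?thesis using apX[OF j, of "-u"] by (simp add: G'_def abs_minus_commute)
    qed
    have cp: "prob (Ep k V) \<le> prob {\<omega>\<in>space M. U \<omega> \<in> V} *
      (((1-c)*(1 - G 0) + 2*\<delta>)^k/(1-c) + real k*\<delta>*((1-c)*(1 - G 0) + 2*\<delta>)^(k-1))"
      unfolding Ep_def using core[OF k1 c0 \<open>0 \<le> \<delta>\<close> Xm Um V boxX apX Gmono Gcont Glim Gconc G01(2)]
      by (simp add: X_def)
    have cm: "prob (Em k V) \<le> prob {\<omega>\<in>space M. U \<omega> \<in> V} *
      (((1-c)*(1 - G' 0) + 2*\<delta>)^k/(1-c) + real k*\<delta>*((1-c)*(1 - G' 0) + 2*\<delta>)^(k-1))"
      unfolding Em_def using core[OF k1 c0 \<open>0 \<le> \<delta>\<close> Ym Um V boxY apY G'mono G'cont G'lim G'conc G'1]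
      by (simp add: Y_def)
    define p where "p = 1 - G 0"
    define q where "q = G 0"
    define a where "a = 1/(1+t)"
    have G'0: "1 - G' 0 = q" by (simp add: G'_def q_def)
    have pq: "0 \<le> p" "0 \<le> q" "p + q = 1" using G01[of 0] by (auto simp: p_def q_def)
    have a0: "0 < a" "a \<le> 1" using assms(3) by (auto simp: a_def field_simps)
    have Dq: "1 - 10*real B*(\<delta>/a) = D" by (simp add: a_def D_def algebra_simps)
    have hP: "hulcP k \<Delta> = p^k + q^k"
    proof -
      have \<Delta>q: "\<Delta> = \<bar>1/2 - q\<bar>" using Delta_W by (simp add: q_def G_def G_eq)
      show ?thesis
      proof (cases "q \<le> 1/2")
        case True
        then have "1/2 - \<Delta> = q" "1/2 + \<Delta> = p" using \<Delta>q pq by auto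
        then show ?thesis by (simp add: hulcP_def add.commute)
      next
        case False
        then have "1/2 - \<Delta> = p" "1/2 + \<Delta> = q" using \<Delta>q pq by auto
        then show ?thesis by (simp add: hulcP_def)
      qed
    qed
    have hQ: "hulcQ k t \<Delta> = (p^k+q^k) * a^(k-1)"
    proof -
      have "(1+t)^k = (1+t) * (1+t)^(k-1)" using k1 by (metis Suc_diff_le diff_Suc_1 power_Suc)
      then show ?thesis using hulcQ_eq[OF assms(3), of k \<Delta>] hP assms(3)
        by (simp add: a_def power_one_over)
    qed
    have "prob (Ep k V) + prob (Em k V) \<le> prob {\<omega>\<in>space M. U \<omega> \<in> V} *
      ((((1-c)*p + 2*\<delta>)^k/(1-c) + real k*\<delta>*((1-c)*p + 2*\<delta>)^(k-1)) +
       (((1-c)*q + 2*\<delta>)^k/(1-c) + real k*\<delta>*((1-c)*q + 2*\<delta>)^(k-1)))"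
      using cp cm G'0 unfolding p_def by (simp add: distrib_left)
    also have "\<dots> \<le> prob {\<omega>\<in>space M. U \<omega> \<in> V} * ((p^k+q^k)*a^(k-1) / (1 - 10*real B*(\<delta>/a)))"
      unfolding a_eq a_def[symmetric] using arith2[OF a0 \<open>0 \<le> \<delta>\<close> pq k1 kB] Dq D0
      by (intro mult_left_mono) auto
    finally show ?thesis using hQ Dq by simp
  qed
  show "measure M {\<omega> \<in> space M.
       \<theta>0 \<notin> ci_mode t (hulc_Bstar \<alpha> t \<Delta> (U \<omega>)) (\<lambda>j. \<theta>hat (hulc_Bstar \<alpha> t \<Delta> (U \<omega>)) j \<omega>)}
    \<le> \<alpha> / (1 - 10 * real (hulcB \<alpha> t \<Delta>) * (1 + t) * \<delta>)"
  proof -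
    have PU: "prob {\<omega>\<in>space M. U \<omega> \<in> A} = measure lborel ({0..1} \<inter> A)" if A: "A \<in> sets borel" for A
    proof -
      have "prob {\<omega>\<in>space M. U \<omega> \<in> A} = measure (distr M lborel U) A"
        using Um A by (subst measure_distr) (auto simp: vimage_def Int_def conj_commute)
      also have "\<dots> = measure lborel ({0..1} \<inter> A)"
        unfolding U_unif using A by (subst measure_uniform_measure) auto
      finally show ?thesis .
    qed
    have PU1: "prob {\<omega>\<in>space M. U \<omega> \<in> {..\<eta>}} = \<eta>"
    proof -
      have "{0..1} \<inter> {..\<eta>} = {0..\<eta>}" using \<eta>1 by auto
      then show ?thesis using PU[of "{..\<eta>}"] \<eta>0 by simp
    qed
    have PU2: "prob {\<omega>\<in>space M. U \<omega> \<in> {\<eta><..}} = 1 - \<eta>"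
    proof -
      have "{0..1} \<inter> {\<eta><..} = {\<eta><..1}" using \<eta>0 by auto
      then show ?thesis using PU[of "{\<eta><..}"] \<eta>1 by simp
    qed
    have Ep_sets: "Ep k V \<in> sets M" if "k \<in> {hulcB \<alpha> t \<Delta> - 1, hulcB \<alpha> t \<Delta>}" "V \<in> sets borel" for k V
    proof -
      have "\<And>j. j<k \<Longrightarrow> (\<lambda>\<omega>. r*(\<theta>hat k j \<omega> - \<theta>0)) \<in> borel_measurable M"
        using meas[OF that(1)] by auto
      then show ?thesis unfolding Ep_def by (rule sets_pairs[OF Um that(2)])
    qed
    have Em_sets: "Em k V \<in> sets M" if "k \<in> {hulcB \<alpha> t \<Delta> - 1, hulcB \<alpha> t \<Delta>}" "V \<in> sets borel" for k V
    proof -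
      have "\<And>j. j<k \<Longrightarrow> (\<lambda>\<omega>. -(r*(\<theta>hat k j \<omega> - \<theta>0))) \<in> borel_measurable M"
        using meas[OF that(1)] by auto
      then show ?thesis unfolding Em_def by (rule sets_pairs[OF Um that(2)])
    qed
    have kins: "B \<in> {hulcB \<alpha> t \<Delta> - 1, hulcB \<alpha> t \<Delta>}" "B - 1 \<in> {hulcB \<alpha> t \<Delta> - 1, hulcB \<alpha> t \<Delta>}"
      by (auto simp: B_def)
    have sets4: "Ep B {..\<eta>} \<in> sets M" "Em B {..\<eta>} \<in> sets M" "Ep (B-1) {\<eta><..} \<in> sets M" "Em (B-1) {\<eta><..} \<in> sets M"
      using Ep_sets[OF kins(1)] Em_sets[OF kins(1)] Ep_sets[OF kins(2)] Em_sets[OF kins(2)] by auto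
    have sub: "{\<omega> \<in> space M.
       \<theta>0 \<notin> ci_mode t (hulc_Bstar \<alpha> t \<Delta> (U \<omega>)) (\<lambda>j. \<theta>hat (hulc_Bstar \<alpha> t \<Delta> (U \<omega>)) j \<omega>)}
       \<subseteq> ((Ep B {..\<eta>} \<union> Em B {..\<eta>}) \<union> (Ep (B-1) {\<eta><..} \<union> Em (B-1) {\<eta><..}))"
    proof
      fix \<omega> assume "\<omega> \<in> {\<omega> \<in> space M.
       \<theta>0 \<notin> ci_mode t (hulc_Bstar \<alpha> t \<Delta> (U \<omega>)) (\<lambda>j. \<theta>hat (hulc_Bstar \<alpha> t \<Delta> (U \<omega>)) j \<omega>)}"
      then have \<omega>: "\<omega> \<in> space M"
        and miss: "\<theta>0 \<notin> ci_mode t (hulc_Bstar \<alpha> t \<Delta> (U \<omega>)) (\<lambda>j. \<theta>hat (hulc_Bstar \<alpha> t \<Delta> (U \<omega>)) j \<omega>)"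
        by auto
      show "\<omega> \<in> ((Ep B {..\<eta>} \<union> Em B {..\<eta>}) \<union> (Ep (B-1) {\<eta><..} \<union> Em (B-1) {\<eta><..}))"
      proof (cases "U \<omega> \<le> \<eta>")
        case True
        then have "hulc_Bstar \<alpha> t \<Delta> (U \<omega>) = B" by (simp add: hulc_Bstar_def \<eta>_def B_def)
        then have "\<theta>0 \<notin> ci_mode t B (\<lambda>j. \<theta>hat B j \<omega>)" using miss by simp
        from miss_cases[OF _ assms(3) \<open>0 < r\<close> this] B2
        have "\<omega> \<in> Ep B {..\<eta>} \<or> \<omega> \<in> Em B {..\<eta>}" using \<omega> True by (simp add: Ep_def Em_def c_def)
        then show ?thesis by blast
      next
        case False
        then have "hulc_Bstar \<alpha> t \<Delta> (U \<omega>) = B - 1" by (simp add: hulc_Bstar_def \<eta>_def B_def)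
        then have "\<theta>0 \<notin> ci_mode t (B-1) (\<lambda>j. \<theta>hat (B-1) j \<omega>)" using miss by simp
        from miss_cases[OF _ assms(3) \<open>0 < r\<close> this] B2
        have "\<omega> \<in> Ep (B-1) {\<eta><..} \<or> \<omega> \<in> Em (B-1) {\<eta><..}" using \<omega> False by (simp add: Ep_def Em_def c_def)
        then show ?thesis by blast
      qed
    qed
    have "measure M {\<omega> \<in> space M.
       \<theta>0 \<notin> ci_mode t (hulc_Bstar \<alpha> t \<Delta> (U \<omega>)) (\<lambda>j. \<theta>hat (hulc_Bstar \<alpha> t \<Delta> (U \<omega>)) j \<omega>)}
      \<le> prob ((Ep B {..\<eta>} \<union> Em B {..\<eta>}) \<union> (Ep (B-1) {\<eta><..} \<union> Em (B-1) {\<eta><..}))"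
      by (rule finite_measure_mono[OF sub]) (use sets4 in auto)
    also have "\<dots> \<le> prob (Ep B {..\<eta>} \<union> Em B {..\<eta>}) + prob (Ep (B-1) {\<eta><..} \<union> Em (B-1) {\<eta><..})"
      by (rule measure_Un_le) (use sets4 in auto)
    also have "\<dots> \<le> (prob (Ep B {..\<eta>}) + prob (Em B {..\<eta>})) + (prob (Ep (B-1) {\<eta><..}) + prob (Em (B-1) {\<eta><..}))"
      using measure_Un_le[OF sets4(1,2)] measure_Un_le[OF sets4(3,4)] by linarith
    also have "\<dots> \<le> \<eta> * (hulcQ B t \<Delta> / D) + (1 - \<eta>) * (hulcQ (B-1) t \<Delta> / D)"
      using perk[of B "{..\<eta>}"] perk[of "B-1" "{\<eta><..}"] PU1 PU2 by (intro add_mono) auto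
    also have "\<dots> = (\<eta> * hulcQ B t \<Delta> + (1 - \<eta>) * hulcQ (B-1) t \<Delta>) / D"
      by (simp add: add_divide_distrib)
    also have "\<dots> = \<alpha> / D" using mix by simp
    finally show ?thesis by (simp add: D_def B_def)
  qed
qed


end
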